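(* Let $X$ be an extensible marked Dynkin diagram with $d$ nodes and let $\Delta$ be the common difference of $\{\det(X_n)\}_{n\ge d}$. Then there exists a sequence of integers $(a_i)_{i\ge1}$, depending only on $X$ and its node numbering, such that in $P(X_n)$ $$(-\Delta)\,\omega_i^{(n)}\equiv a_i\,\overline{\omega}_1^{(n)}\pmod{Q(X_n)}$$ for all $i=1,\dots,n$ and for all $n\ge d$ such that $\det(X_n)\ne0$. Moreover, the $a_i$ are the unique integers with this property.
   Context: A marked Dynkin diagram $X$ has nodes $1,\dots,d$ with node $d$ distinguished and symmetrizable generalized Cartan matrix $C(X)$. For $n\ge d$, $X_n$ is obtained by attaching a simply-laced chain of new nodes $d+1,\dots,n$ to node $d$ (so $C(X_n)$ has $C(X)$ as upper-left block, $2$ on the remaining diagonal, $-1$ in positions $(i,i+1),(i+1,i)$ for $d\le i<n$, $0$ elsewhere). $\det(Y)$ is the determinant of the generalized Cartan matrix of $Y$. $X$ is extensible if $\Delta\ne0$, $\det(X)\ne0$ and $\gcd(\Delta,\det X)=1$. For $\mathfrak g(X_n)$: simple roots $\alpha_i^{(n)}$, coroots $\check\alpha_i^{(n)}$ with $\alpha_j^{(n)}(\check\alpha_i^{(n)})=C(X_n)_{ij}$, root lattice $Q(X_n)$, weight lattice $P(X_n)$, fundamental weights $\omega_i^{(n)}$ with $\omega_i^{(n)}(\check\alpha_j^{(n)})=\delta_{ij}$, and $\overline{\omega}_i^{(n)}=\omega_{n-i+1}^{(n)}$. *)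

theory Defs
  imports Complex_Main "HOL-Combinatorics.Permutations"
begin

text \<open>Square integer matrices with rows/columns indexed by 1..n are represented
  as functions nat => nat => int (entries outside 1..n are irrelevant).\<close>

definition gdet :: "nat \<Rightarrow> (nat \<Rightarrow> nat \<Rightarrow> int) \<Rightarrow> int" where
  "gdet n A = (\<Sum>p | p permutes {1..n}. sign p * (\<Prod>i\<in>{1..n}. A i (p i)))"

definition is_gcm :: "nat \<Rightarrow> (nat \<Rightarrow> nat \<Rightarrow> int) \<Rightarrow> bool" where
  "is_gcm d C \<longleftrightarrow>
     (\<forall>i\<in>{1..d}. C i i = 2) \<and>
     (\<forall>i\<in>{1..d}. \<forall>j\<in>{1..d}. i \<noteq> j \<longrightarrow> C i j \<le> 0) \<and>
     (\<forall>i\<in>{1..d}. \<forall>j\<in>{1..d}. C i j = 0 \<longleftrightarrow> C j i = 0)"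

text \<open>Symmetrizable: C = D B with D positive diagonal and B symmetric,
  equivalently e_i C_ij = e_j C_ji for positive e_i (e = D^{-1}).\<close>
definition symmetrizable :: "nat \<Rightarrow> (nat \<Rightarrow> nat \<Rightarrow> int) \<Rightarrow> bool" where
  "symmetrizable d C \<longleftrightarrow>
     (\<exists>e :: nat \<Rightarrow> rat. (\<forall>i\<in>{1..d}. e i > 0) \<and>
        (\<forall>i\<in>{1..d}. \<forall>j\<in>{1..d}. e i * of_int (C i j) = e j * of_int (C j i)))"

definition ext_cartan :: "(nat \<Rightarrow> nat \<Rightarrow> int) \<Rightarrow> nat \<Rightarrow> nat \<Rightarrow> nat \<Rightarrow> nat \<Rightarrow> int" where
  "ext_cartan C d n i j =
     (if i \<in> {1..d} \<and> j \<in> {1..d} then C i j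
      else if i \<in> {1..n} \<and> j \<in> {1..n} \<and> i = j then 2
      else if (d \<le> i \<and> i < n \<and> j = i + 1) \<or> (d \<le> j \<and> j < n \<and> i = j + 1) then -1
      else 0)"

definition det_ext :: "(nat \<Rightarrow> nat \<Rightarrow> int) \<Rightarrow> nat \<Rightarrow> nat \<Rightarrow> int" where
  "det_ext C d n = gdet n (ext_cartan C d n)"

text \<open>Common difference Delta of the arithmetic progression det(X_n), n >= d.\<close>
definition Delta :: "(nat \<Rightarrow> nat \<Rightarrow> int) \<Rightarrow> nat \<Rightarrow> int" where
  "Delta C d = det_ext C d (d + 1) - det_ext C d d"

definition extensible :: "(nat \<Rightarrow> nat \<Rightarrow> int) \<Rightarrow> nat \<Rightarrow> bool" where
  "extensible C d \<longleftrightarrow> Delta C d \<noteq> 0 \<and> gdet d C \<noteq> 0 \<and> gcd (Delta C d) (gdet d C) = 1"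

text \<open>When det(X_n) is nonzero, the coroots of g(X_n) form a basis of h, so an
  element lambda of h* is determined by the vector (lambda(coroot_j))_{j=1..n}.
  We represent elements of P(X_n) by this integer coordinate vector
  (a function nat => int vanishing outside 1..n).\<close>

definition fund_weight :: "nat \<Rightarrow> nat \<Rightarrow> (nat \<Rightarrow> int)" where
  "fund_weight n i = (\<lambda>j. if j \<in> {1..n} \<and> j = i then 1 else 0)"

text \<open>alpha_j(coroot_i) = C(X_n)_{ij}.\<close>
definition simple_root :: "(nat \<Rightarrow> nat \<Rightarrow> int) \<Rightarrow> nat \<Rightarrow> nat \<Rightarrow> nat \<Rightarrow> (nat \<Rightarrow> int)" where
  "simple_root C d n j = (\<lambda>i. if i \<in> {1..n} then ext_cartan C d n i j else 0)"

definition root_lattice :: "(nat \<Rightarrow> nat \<Rightarrow> int) \<Rightarrow> nat \<Rightarrow> nat \<Rightarrow> (nat \<Rightarrow> int) set" where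
  "root_lattice C d n =
     {(\<lambda>i. \<Sum>j\<in>{1..n}. c j * simple_root C d n j i) | c :: nat \<Rightarrow> int. True}"

definition smult_w :: "int \<Rightarrow> (nat \<Rightarrow> int) \<Rightarrow> (nat \<Rightarrow> int)" where
  "smult_w k v = (\<lambda>j. k * v j)"

definition congr_Q :: "(nat \<Rightarrow> nat \<Rightarrow> int) \<Rightarrow> nat \<Rightarrow> nat \<Rightarrow> (nat \<Rightarrow> int) \<Rightarrow> (nat \<Rightarrow> int) \<Rightarrow> bool" where
  "congr_Q C d n lam mu \<longleftrightarrow> (\<lambda>j. lam j - mu j) \<in> root_lattice C d n"

definition fund_weight_bar :: "nat \<Rightarrow> nat \<Rightarrow> (nat \<Rightarrow> int)" where
  "fund_weight_bar n i = fund_weight n (n - i + 1)"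

definition weight_seq_prop :: "(nat \<Rightarrow> nat \<Rightarrow> int) \<Rightarrow> nat \<Rightarrow> (nat \<Rightarrow> int) \<Rightarrow> bool" where
  "weight_seq_prop C d a \<longleftrightarrow>
     (\<forall>n\<ge>d. det_ext C d n \<noteq> 0 \<longrightarrow>
        (\<forall>i\<in>{1..n}. congr_Q C d n (smult_w (- Delta C d) (fund_weight n i))
                                    (smult_w (a i) (fund_weight_bar n 1))))"

end

theory Submission
  imports Defs "Jordan_Normal_Form.Determinant"
begin


definition Mx :: "nat \<Rightarrow> (nat \<Rightarrow> nat \<Rightarrow> int) \<Rightarrow> int mat" where
  "Mx n A = mat n n (\<lambda>(i,j). A (Suc i) (Suc j))"

lemma Mx_carrier[simp]: "Mx n A \<in> carrier_mat n n" by (simp add: Mx_def)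

lemma gdet_Mx: "gdet n A = det (Mx n A)"
proof -
  define g where "g = (\<lambda>(p::nat\<Rightarrow>nat) x. if x \<in> {1..n} then Suc (p (x - 1)) else x)"
  have bij: "bij_betw Suc {0..<n} {1..n}"
    by (simp add: bij_betw_def inj_on_def image_Suc_atLeastLessThan atLeastLessThanSuc_atLeastAtMost)
  have bijg: "bij_betw g {p. p permutes {0..<n}} {p. p permutes {1..n}}"
  proof -
    have "bij_betw (\<lambda>\<pi> x. if x \<in> {1..n} then Suc (\<pi> (inv_into {0..<n} Suc x)) else x)
             {\<pi>. \<pi> permutes {0..<n}} {\<pi>. \<pi> permutes {1..n}}"
      by (rule bij_betw_permutations[OF bij])
    moreover have "(\<lambda>\<pi> x. if x \<in> {1..n} then Suc (\<pi> (inv_into {0..<n} Suc x)) else x) = g"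
    proof (intro ext)
      fix \<pi> x show "(if x \<in> {1..n} then Suc (\<pi> (inv_into {0..<n} Suc x)) else x) = g \<pi> x"
      proof (cases "x \<in> {1..n}")
        case True
        then obtain y where "x = Suc y" "y < n" by (cases x) auto
        then have "inv_into {0..<n} Suc x = x - 1" by (simp add: inv_into_f_eq)
        then show ?thesis using True by (simp add: g_def)
      next
        case False then show ?thesis unfolding g_def by auto
      qed
    qed
    ultimately show ?thesis by simp
  qed
  have sg: "sign (g p) = sign p" if "p permutes {0..<n}" for p
  proof -
    have "permutes_bij_finite p {0..<n} {1..n} Suc (\<lambda>x. x - 1)"
      by unfold_locales (use that bij in auto)
    from permutes_bij_finite.sign_p'[OF this] show ?thesis by (simp add: g_def)
  qed
  have pr: "(\<Prod>i\<in>{1..n}. A i (g p i)) = (\<Prod>i = 0..<n. Mx n A $$ (i, p i))"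
    if "p permutes {0..<n}" for p
  proof -
    have "(\<Prod>i\<in>{1..n}. A i (g p i)) = (\<Prod>i\<in>{0..<n}. A (Suc i) (g p (Suc i)))"
      by (subst prod.reindex_bij_betw[OF bij, symmetric]) simp
    also have "\<dots> = (\<Prod>i = 0..<n. Mx n A $$ (i, p i))"
      using that by (intro prod.cong) (auto simp: g_def Mx_def permutes_in_image)
    finally show ?thesis .
  qed
  have "gdet n A = (\<Sum>p\<in>{p. p permutes {0..<n}}. sign (g p) * (\<Prod>i\<in>{1..n}. A i (g p i)))"
    unfolding gdet_def by (subst sum.reindex_bij_betw[OF bijg, symmetric]) simp
  also have "\<dots> = (\<Sum>p\<in>{p. p permutes {0..<n}}. sign p * (\<Prod>i = 0..<n. Mx n A $$ (i, p i)))"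
  proof (rule sum.cong[OF refl])
    fix p assume "p \<in> {p. p permutes {0..<n}}"
    then have "p permutes {0..<n}" by simp
    then show "sign (g p) * (\<Prod>i\<in>{1..n}. A i (g p i)) = sign p * (\<Prod>i = 0..<n. Mx n A $$ (i, p i))"
      using sg pr by metis
  qed
  also have "\<dots> = det (Mx n A)" by (subst det_def'[OF Mx_carrier]) simp
  finally show ?thesis .
qed

lemma det_tail:
  fixes B :: "int mat"
  assumes B: "B \<in> carrier_mat (Suc (Suc m)) (Suc (Suc m))"
  and row: "\<And>j. j < m \<Longrightarrow> B $$ (Suc m, j) = 0" and r2: "B $$ (Suc m, m) = -1"
  and col: "\<And>i. i < m \<Longrightarrow> B $$ (i, Suc m) = 0" and c2: "B $$ (m, Suc m) = -1"
  shows "det B = B $$ (Suc m, Suc m) * det (mat_delete B (Suc m) (Suc m))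
                 - det (mat_delete (mat_delete B (Suc m) m) m m)"
proof -
  define E where "E = mat_delete B (Suc m) m"
  have E: "E \<in> carrier_mat (Suc m) (Suc m)" unfolding E_def using mat_delete_carrier[OF B] by simp
  have Ecol: "E $$ (i, m) = B $$ (i, Suc m)" if "i < Suc m" for i
    using that B unfolding E_def mat_delete_def by auto
  have "det E = (\<Sum>i<Suc m. E $$ (i,m) * cofactor E i m)"
    by (rule laplace_expansion_column[OF E]) simp
  also have "\<dots> = E $$ (m,m) * cofactor E m m"
    using col Ecol by (simp add: lessThan_Suc)
  also have "\<dots> = - det (mat_delete E m m)"
    using Ecol c2 by (simp add: cofactor_def)
  finally have dE: "det E = - det (mat_delete E m m)" .
  have "det B = (\<Sum>j<Suc (Suc m). B $$ (Suc m,j) * cofactor B (Suc m) j)"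
    by (rule laplace_expansion_row[OF B]) simp
  also have "\<dots> = B $$ (Suc m, m) * cofactor B (Suc m) m + B $$ (Suc m, Suc m) * cofactor B (Suc m) (Suc m)"
    using row by (simp add: lessThan_Suc)
  also have "\<dots> = B $$ (Suc m, Suc m) * det (mat_delete B (Suc m) (Suc m)) - det (mat_delete E m m)"
    using r2 dE by (simp add: cofactor_def E_def)
  finally show ?thesis unfolding E_def .
qed

lemma ext_restrict:
  "1 \<le> i \<Longrightarrow> i \<le> m \<Longrightarrow> 1 \<le> j \<Longrightarrow> j \<le> m \<Longrightarrow> m \<le> m' \<Longrightarrow>
   ext_cartan C d m i j = ext_cartan C d m' i j"
  by (auto simp: ext_cartan_def)

lemma ext_restrict':
  "1 \<le> i \<Longrightarrow> i \<le> m \<Longrightarrow> 1 \<le> j \<Longrightarrow> j \<le> m \<Longrightarrow> m \<le> m' \<Longrightarrow>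
   ext_cartan C d m' i j = ext_cartan C d m i j"
  by (auto simp: ext_cartan_def)

definition extT :: "(nat \<Rightarrow> nat \<Rightarrow> int) \<Rightarrow> nat \<Rightarrow> nat \<Rightarrow> int \<Rightarrow> nat \<Rightarrow> nat \<Rightarrow> int" where
  "extT C d m t = (\<lambda>i j. if i = Suc (Suc m) \<and> j = Suc (Suc m) then t else ext_cartan C d (Suc (Suc m)) i j)"

lemma det_rec:
  assumes "d \<le> Suc m"
  shows "gdet (Suc (Suc m)) (extT C d m t) = t * gdet (Suc m) (ext_cartan C d (Suc m)) - gdet m (ext_cartan C d m)"
proof -
  let ?B = "Mx (Suc (Suc m)) (extT C d m t)"
  have B: "?B \<in> carrier_mat (Suc (Suc m)) (Suc (Suc m))" by simp
  have "det ?B = ?B $$ (Suc m, Suc m) * det (mat_delete ?B (Suc m) (Suc m))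
                 - det (mat_delete (mat_delete ?B (Suc m) m) m m)"
    by (rule det_tail[OF B]) (use assms in \<open>auto simp: Mx_def extT_def ext_cartan_def\<close>)
  moreover have "?B $$ (Suc m, Suc m) = t" by (simp add: Mx_def extT_def)
  moreover have "mat_delete ?B (Suc m) (Suc m) = Mx (Suc m) (ext_cartan C d (Suc m))"
    by (rule eq_matI) (auto simp: Mx_def extT_def mat_delete_def intro!: ext_restrict')
  moreover have "mat_delete (mat_delete ?B (Suc m) m) m m = Mx m (ext_cartan C d m)"
    by (rule eq_matI) (auto simp: Mx_def extT_def mat_delete_def intro!: ext_restrict')
  ultimately show ?thesis by (simp add: gdet_Mx)
qed

definition Lop :: "(nat \<Rightarrow> nat \<Rightarrow> int) \<Rightarrow> nat \<Rightarrow> (nat \<Rightarrow> int) \<Rightarrow> nat \<Rightarrow> int" where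
  "Lop C d c k = (if k < d then (\<Sum>j\<in>{1..d}. c j * C k j)
     else if k = d then (\<Sum>j\<in>{1..d}. c j * C d j) - c (Suc d)
     else - c (k - 1) + 2 * c k - c (Suc k))"

lemma row_lemma:
  assumes "d \<le> n" "1 \<le> k" "k \<le> n" "1 \<le> d"
  shows "(\<Sum>j\<in>{1..n}. c j * ext_cartan C d n k j) = Lop C d c k + (if k = n then c (Suc n) else 0)"
proof -
  consider "k < d" | "k = d" | "d < k" by linarith
  then show ?thesis
  proof cases
    case 1
    have "(\<Sum>j\<in>{1..n}. c j * ext_cartan C d n k j) = (\<Sum>j\<in>{1..d}. c j * ext_cartan C d n k j)"
      using assms 1 by (intro sum.mono_neutral_right) (auto simp: ext_cartan_def)
    also have "\<dots> = (\<Sum>j\<in>{1..d}. c j * C k j)"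
      using assms 1 by (intro sum.cong) (auto simp: ext_cartan_def)
    finally show ?thesis using 1 assms by (simp add: Lop_def)
  next
    case 2
    show ?thesis
    proof (cases "d = n")
      case True
      have "(\<Sum>j\<in>{1..n}. c j * ext_cartan C d n k j) = (\<Sum>j\<in>{1..d}. c j * C d j)"
        using assms 2 True by (intro sum.cong) (auto simp: ext_cartan_def)
      then show ?thesis using 2 True by (simp add: Lop_def)
    next
      case False
      have "(\<Sum>j\<in>{1..n}. c j * ext_cartan C d n k j) = (\<Sum>j\<in>{1..Suc d}. c j * ext_cartan C d n k j)"
        using assms 2 False by (intro sum.mono_neutral_right) (auto simp: ext_cartan_def)
      also have "\<dots> = (\<Sum>j\<in>{1..d}. c j * ext_cartan C d n k j) + c (Suc d) * ext_cartan C d n k (Suc d)"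
        by (simp add: assms)
      also have "\<dots> = (\<Sum>j\<in>{1..d}. c j * C d j) - c (Suc d)"
        using assms 2 False by (auto simp: ext_cartan_def intro!: sum.cong)
      finally show ?thesis using 2 False assms by (simp add: Lop_def)
    qed
  next
    case 3
    have e: "c j * ext_cartan C d n k j = (if j = k - 1 then - c (k - 1) else 0) + (if j = k then 2 * c k else 0)
        + (if j = Suc k \<and> k < n then - c (Suc k) else 0)" if "j \<in> {1..n}" for j
      using assms 3 that by (auto simp: ext_cartan_def)
    have "(\<Sum>j\<in>{1..n}. c j * ext_cartan C d n k j) = - c (k - 1) + 2 * c k + (if k < n then - c (Suc k) else 0)"
      using assms 3 by (auto simp: e sum.distrib sum.delta)
    then show ?thesis using 3 assms by (auto simp: Lop_def)
  qed
qed


lemma ext_last: "d \<le> Suc m \<Longrightarrow> ext_cartan C d (Suc (Suc m)) (Suc (Suc m)) (Suc (Suc m)) = 2"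
  by (simp add: ext_cartan_def)
lemma extT2: "d \<le> Suc m \<Longrightarrow> extT C d m 2 = ext_cartan C d (Suc (Suc m))"
  unfolding extT_def using ext_last[of d m C] by (intro ext) auto
lemma D_rec: "d \<le> Suc m \<Longrightarrow>
  det_ext C d (Suc (Suc m)) = 2 * det_ext C d (Suc m) - det_ext C d m"
  using det_rec[of d m C 2] by (simp add: det_ext_def extT2)

lemma Delta_eq: "1 \<le> d \<Longrightarrow> Delta C d = det_ext C d d - det_ext C d (d - 1)"
  using D_rec[of d "d - 1" C] by (simp add: Delta_def)

lemma detA: "1 \<le> d \<Longrightarrow> gdet (Suc d) (extT C d (d - 1) 1) = Delta C d"
  using det_rec[of d "d - 1" C 1] Delta_eq[of d C] by (simp add: det_ext_def)

lemma D_lin_aux: "1 \<le> d \<Longrightarrow>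
  det_ext C d (d + k) = det_ext C d d + int k * Delta C d \<and>
  det_ext C d (d + Suc k) = det_ext C d d + int (Suc k) * Delta C d"
proof (induction k)
  case 0 then show ?case by (simp add: Delta_def)
next
  case (Suc k)
  have "det_ext C d (Suc (Suc (d + k))) = 2 * det_ext C d (Suc (d + k)) - det_ext C d (d + k)"
    by (rule D_rec) simp
  then show ?case using Suc by (simp add: algebra_simps)
qed

lemma D_lin: "1 \<le> d \<Longrightarrow> d \<le> n \<Longrightarrow> det_ext C d n = det_ext C d d + int (n - d) * Delta C d"
  using D_lin_aux[of d C "n - d"] by simp
lemma mult_entry_left:
  assumes K: "Kmat \<in> carrier_mat N N'" and k: "k < N" and l: "l < N'"
  shows "(Mx N A * Kmat) $$ (k, l) = (\<Sum>j\<in>{1..N}. A (Suc k) j * Kmat $$ (j - 1, l))"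
proof -
  have "(Mx N A * Kmat) $$ (k, l) = (\<Sum>j\<in>{0..<N}. A (Suc k) (Suc j) * Kmat $$ (j, l))"
    using K k l by (simp add: scalar_prod_def Mx_def)
  also have "\<dots> = (\<Sum>j\<in>Suc ` {0..<N}. A (Suc k) j * Kmat $$ (j - 1, l))"
    by (subst sum.reindex) auto
  also have "Suc ` {0..<N} = {1..N}" by (simp add: image_Suc_atLeastLessThan atLeastLessThanSuc_atLeastAtMost)
  finally show ?thesis .
qed

lemma mult_entry_right:
  assumes K: "Kmat \<in> carrier_mat N' N" and l: "l < N'" and j: "j < N"
  shows "(Kmat * Mx N A) $$ (l, j) = (\<Sum>k\<in>{1..N}. Kmat $$ (l, k - 1) * A k (Suc j))"
proof -
  have "(Kmat * Mx N A) $$ (l, j) = (\<Sum>k\<in>{0..<N}. Kmat $$ (l, k) * A (Suc k) (Suc j))"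
    using K j l by (simp add: scalar_prod_def Mx_def)
  also have "\<dots> = (\<Sum>k\<in>Suc ` {0..<N}. Kmat $$ (l, k - 1) * A k (Suc j))"
    by (subst sum.reindex) auto
  also have "Suc ` {0..<N} = {1..N}" by (simp add: image_Suc_atLeastLessThan atLeastLessThanSuc_atLeastAtMost)
  finally show ?thesis .
qed

lemma extT_alt: "d \<le> Suc m \<Longrightarrow>
  extT C d m t i j = ext_cartan C d (Suc (Suc m)) i j + (if i = Suc (Suc m) \<and> j = Suc (Suc m) then t - 2 else 0)"
  using ext_last[of d m C] by (auto simp: extT_def)

lemma extT_row:
  assumes "1 \<le> d" "1 \<le> k" "k \<le> Suc d"
  shows "(\<Sum>j\<in>{1..Suc d}. c j * extT C d (d - 1) t k j) =
     Lop C d c k + (if k = Suc d then c (Suc (Suc d)) + (t - 2) * c (Suc d) else 0)"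
proof -
  have e: "c j * extT C d (d - 1) t k j = c j * ext_cartan C d (Suc d) k j
      + (if j = Suc d then (if k = Suc d then (t - 2) * c (Suc d) else 0) else 0)" for j
    using extT_alt[of d "d - 1" C t k j] assms by (auto simp: algebra_simps)
  have "(\<Sum>j\<in>{1..Suc d}. c j * extT C d (d - 1) t k j) =
     (\<Sum>j\<in>{1..Suc d}. c j * ext_cartan C d (Suc d) k j) + (if k = Suc d then (t - 2) * c (Suc d) else 0)"
    unfolding e sum.distrib by (simp add: sum.delta)
  also have "(\<Sum>j\<in>{1..Suc d}. c j * ext_cartan C d (Suc d) k j) = Lop C d c k + (if k = Suc d then c (Suc (Suc d)) else 0)"
    by (rule row_lemma) (use assms in auto)
  finally show ?thesis by simp
qed

definition Am :: "(nat \<Rightarrow> nat \<Rightarrow> int) \<Rightarrow> nat \<Rightarrow> int mat" where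
  "Am C d = Mx (Suc d) (extT C d (d - 1) 1)"

definition Kd :: "(nat \<Rightarrow> nat \<Rightarrow> int) \<Rightarrow> nat \<Rightarrow> int mat" where
  "Kd C d = adj_mat (Am C d)"

lemma Kd_carrier: "Kd C d \<in> carrier_mat (Suc d) (Suc d)"
  unfolding Kd_def Am_def by (rule adj_mat(1)) simp

lemma AK: assumes "1 \<le> d"
  shows "Am C d * Kd C d = Delta C d \<cdot>\<^sub>m 1\<^sub>m (Suc d)" "Kd C d * Am C d = Delta C d \<cdot>\<^sub>m 1\<^sub>m (Suc d)"
proof -
  have "det (Am C d) = Delta C d" using detA[OF assms, of C] by (simp add: Am_def gdet_Mx)
  then show "Am C d * Kd C d = Delta C d \<cdot>\<^sub>m 1\<^sub>m (Suc d)" "Kd C d * Am C d = Delta C d \<cdot>\<^sub>m 1\<^sub>m (Suc d)"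
    using adj_mat(2,3)[of "Am C d" "Suc d"] unfolding Kd_def by (auto simp: Am_def)
qed

lemma y_exist:
  assumes d: "1 \<le> d" and m: "1 \<le> m" "m \<le> d" and k: "k \<in> {1..d}"
  shows "(\<Sum>j\<in>{1..d}. (- Kd C d $$ (j - 1, m - 1)) * C k j) - (if k = d then - Kd C d $$ (d - 1, m - 1) else 0)
         = - Delta C d * (if k = m then 1 else 0)"
proof -
  define c where "c = (\<lambda>j. Kd C d $$ (j - 1, m - 1))"
  have row: "(\<Sum>j\<in>{1..Suc d}. c j * extT C d (d - 1) 1 k' j) = Delta C d * (if k' = m then 1 else 0)"
    if "1 \<le> k'" "k' \<le> Suc d" for k'
  proof -
    have "(Am C d * Kd C d) $$ (k' - 1, m - 1) = (\<Sum>j\<in>{1..Suc d}. extT C d (d - 1) 1 (Suc (k' - 1)) j * Kd C d $$ (j - 1, m - 1))"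
      unfolding Am_def by (rule mult_entry_left[OF Kd_carrier]) (use that m in auto)
    moreover have "Suc (k' - 1) = k'" using that by simp
    moreover have "(Am C d * Kd C d) $$ (k' - 1, m - 1) = Delta C d * (if k' = m then 1 else 0)"
      using that m unfolding AK(1)[OF d] by auto
    ultimately show ?thesis unfolding c_def by (simp add: mult.commute)
  qed
  have last: "c (Suc d) = c d"
    using row[of "Suc d"] extT_row[OF d, where k="Suc d" and c=c and t=1 and C=C] m by (simp add: Lop_def)
  have "Lop C d c k = Delta C d * (if k = m then 1 else 0)"
    using row[of k] extT_row[OF d, where k=k and c=c and t=1 and C=C] k by simp
  then have "(\<Sum>j\<in>{1..d}. c j * C k j) - (if k = d then c d else 0) = Delta C d * (if k = m then 1 else 0)"
    using k last by (auto simp: Lop_def split: if_splits)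
  moreover have "(\<Sum>j\<in>{1..d}. (- c j) * C k j) - (if k = d then - c d else 0)
     = - ((\<Sum>j\<in>{1..d}. c j * C k j) - (if k = d then c d else 0))"
    by (cases "k = d") (simp_all add: sum_negf)
  ultimately have "(\<Sum>j\<in>{1..d}. (- c j) * C k j) - (if k = d then - c d else 0)
     = - Delta C d * (if k = m then 1 else 0)" by simp
  then show ?thesis unfolding c_def .
qed

lemma y_unique:
  assumes d: "1 \<le> d"
    and hy: "\<And>k. k \<in> {1..d} \<Longrightarrow> (\<Sum>j\<in>{1..d}. y j * C k j) - (if k = d then y d else 0) = s * (if k = d then 1 else 0)"
  shows "Delta C d * y d = s * Kd C d $$ (d - 1, d - 1)"
proof -
  define c where "c = (\<lambda>j. if j \<le> d then y j else y d)"
  have sc: "(\<Sum>j\<in>{1..d}. c j * C k j) = (\<Sum>j\<in>{1..d}. y j * C k j)" for k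
    by (intro sum.cong) (auto simp: c_def)
  have rowc: "(\<Sum>j\<in>{1..Suc d}. c j * extT C d (d - 1) 1 k j) = s * (if k = d then 1 else 0)"
    if hk: "1 \<le> k" "k \<le> Suc d" for k
  proof -
    have r: "(\<Sum>j\<in>{1..Suc d}. c j * extT C d (d - 1) 1 k j) =
      Lop C d c k + (if k = Suc d then c (Suc (Suc d)) + (1 - 2) * c (Suc d) else 0)"
      by (rule extT_row) (use that d in auto)
    consider "k < d" | "k = d" | "k = Suc d" using hk by linarith
    then show ?thesis
    proof cases
      case 1 then show ?thesis using r hy[of k] hk sc[of k] by (simp add: Lop_def)
    next
      case 2 then show ?thesis using r hy[of k] hk d sc[of k] by (simp add: Lop_def c_def)
    next
      case 3 then show ?thesis using r d by (simp add: Lop_def c_def)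
    qed
  qed
  have KA: "(\<Sum>k\<in>{1..Suc d}. Kd C d $$ (d - 1, k - 1) * extT C d (d - 1) 1 k j) = Delta C d * (if j = d then 1 else 0)"
    if "j \<in> {1..Suc d}" for j
  proof -
    have "(Kd C d * Am C d) $$ (d - 1, j - 1) = (\<Sum>k\<in>{1..Suc d}. Kd C d $$ (d - 1, k - 1) * extT C d (d - 1) 1 k (Suc (j - 1)))"
      unfolding Am_def by (rule mult_entry_right[OF Kd_carrier]) (use that d in auto)
    moreover have "Suc (j - 1) = j" using that by simp
    moreover have "(Kd C d * Am C d) $$ (d - 1, j - 1) = Delta C d * (if j = d then 1 else 0)"
      using that d unfolding AK(2)[OF d] by auto
    ultimately show ?thesis by simp
  qed
  have "(\<Sum>j\<in>{1..Suc d}. c j * (\<Sum>k\<in>{1..Suc d}. Kd C d $$ (d - 1, k - 1) * extT C d (d - 1) 1 k j))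
      = (\<Sum>j\<in>{1..Suc d}. c j * (Delta C d * (if j = d then 1 else 0)))"
  proof (rule sum.cong[OF refl])
    fix j assume "j \<in> {1..Suc d}"
    from KA[OF this] show "c j * (\<Sum>k\<in>{1..Suc d}. Kd C d $$ (d - 1, k - 1) * extT C d (d - 1) 1 k j) = c j * (Delta C d * (if j = d then 1 else 0))"
      by simp
  qed
  also have "\<dots> = Delta C d * y d" using d by (simp add: c_def if_distrib sum.delta cong: if_cong)
  finally have e1: "(\<Sum>j\<in>{1..Suc d}. c j * (\<Sum>k\<in>{1..Suc d}. Kd C d $$ (d - 1, k - 1) * extT C d (d - 1) 1 k j)) = Delta C d * y d" .
  have "(\<Sum>j\<in>{1..Suc d}. c j * (\<Sum>k\<in>{1..Suc d}. Kd C d $$ (d - 1, k - 1) * extT C d (d - 1) 1 k j))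
     = (\<Sum>k\<in>{1..Suc d}. Kd C d $$ (d - 1, k - 1) * (\<Sum>j\<in>{1..Suc d}. c j * extT C d (d - 1) 1 k j))"
    unfolding sum_distrib_left
    by (subst sum.swap) (intro sum.cong refl, simp only: mult.left_commute)
  also have "\<dots> = (\<Sum>k\<in>{1..Suc d}. Kd C d $$ (d - 1, k - 1) * (s * (if k = d then 1 else 0)))"
  proof (rule sum.cong[OF refl])
    fix k assume "k \<in> {1..Suc d}"
    then have "1 \<le> k" "k \<le> Suc d" by auto
    from rowc[OF this] show "Kd C d $$ (d - 1, k - 1) * (\<Sum>j\<in>{1..Suc d}. c j * extT C d (d - 1) 1 k j) = Kd C d $$ (d - 1, k - 1) * (s * (if k = d then 1 else 0))"
      by simp
  qed
  also have "\<dots> = s * Kd C d $$ (d - 1, d - 1)" using d by (simp add: if_distrib sum.delta cong: if_cong)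
  finally show ?thesis using e1 by simp
qed

definition ycoef :: "(nat \<Rightarrow> nat \<Rightarrow> int) \<Rightarrow> nat \<Rightarrow> nat \<Rightarrow> nat \<Rightarrow> int" where
  "ycoef C d i j = - Kd C d $$ (j - 1, min i d - 1)"

definition cvec :: "(nat \<Rightarrow> nat \<Rightarrow> int) \<Rightarrow> nat \<Rightarrow> nat \<Rightarrow> nat \<Rightarrow> int" where
  "cvec C d i j = (if j \<le> d then ycoef C d i j
     else ycoef C d i d - Delta C d * (int (min j (max i d)) - int d))"

definition aseq :: "(nat \<Rightarrow> nat \<Rightarrow> int) \<Rightarrow> nat \<Rightarrow> nat \<Rightarrow> int" where
  "aseq C d i = Delta C d * (int (max i d) - int d) - ycoef C d i d"

lemma cvec_tail: "d \<le> j \<Longrightarrow> cvec C d i j = ycoef C d i d - Delta C d * (int (min j (max i d)) - int d)"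
  by (auto simp: cvec_def)

lemma ycoef_prop:
  assumes d: "1 \<le> d" and i: "1 \<le> i" and k: "k \<in> {1..d}"
  shows "(\<Sum>j\<in>{1..d}. ycoef C d i j * C k j) - (if k = d then ycoef C d i d else 0)
         = - Delta C d * (if k = min i d then 1 else 0)"
  unfolding ycoef_def by (rule y_exist) (use d i k in auto)

lemma Lop_c:
  assumes d: "1 \<le> d" and i: "1 \<le> i" and k: "1 \<le> k"
  shows "Lop C d (cvec C d i) k = - Delta C d * (if k = i then 1 else 0)"
proof -
  have sc: "(\<Sum>j\<in>{1..d}. cvec C d i j * C k' j) = (\<Sum>j\<in>{1..d}. ycoef C d i j * C k' j)" for k'
    by (intro sum.cong) (auto simp: cvec_def)
  consider "k < d" | "k = d" | "d < k" by linarith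
  then show ?thesis
  proof cases
    case 1
    have "(\<Sum>j\<in>{1..d}. ycoef C d i j * C k j) = - Delta C d * (if k = min i d then 1 else 0)"
      using ycoef_prop[OF d i, of k C] 1 k by simp
    moreover have "(k = min i d) = (k = i)" using 1 by auto
    ultimately show ?thesis using 1 sc[of k] by (simp add: Lop_def)
  next
    case 2
    have "(\<Sum>j\<in>{1..d}. ycoef C d i j * C d j) - ycoef C d i d = - Delta C d * (if d = min i d then 1 else 0)"
      using ycoef_prop[OF d i, of d C] d by simp
    moreover have "cvec C d i (Suc d) = ycoef C d i d - Delta C d * (int (min (Suc d) (max i d)) - int d)"
      by (simp add: cvec_def)
    ultimately show ?thesis using 2 sc[of d]
      by (cases "i < d"; cases "i = d") (auto simp: Lop_def max_def min_def algebra_simps)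
  next
    case 3
    have "Lop C d (cvec C d i) k = - cvec C d i (k - 1) + 2 * cvec C d i k - cvec C d i (Suc k)"
      using 3 by (simp add: Lop_def)
    also have "\<dots> = Delta C d * (int (min (k - 1) (max i d)) - 2 * int (min k (max i d)) + int (min (Suc k) (max i d)))"
      using 3 by (simp add: cvec_tail algebra_simps)
    also have "\<dots> = - Delta C d * (if k = i then 1 else 0)"
      using 3 by (cases "k < max i d"; cases "k = max i d") (auto simp: max_def min_def)
    finally show ?thesis .
  qed
qed

lemma exist_n:
  assumes d: "1 \<le> d" and n: "d \<le> n" and i: "i \<in> {1..n}"
  shows "congr_Q C d n (smult_w (- Delta C d) (fund_weight n i)) (smult_w (aseq C d i) (fund_weight_bar n 1))"
proof -
  have fb: "fund_weight_bar n 1 = fund_weight n n" using n d by (simp add: fund_weight_bar_def)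
  have cn: "cvec C d i (Suc n) = - aseq C d i"
    using n i by (simp add: cvec_tail aseq_def max_def min_def)
  have "(\<lambda>j. smult_w (- Delta C d) (fund_weight n i) j - smult_w (aseq C d i) (fund_weight_bar n 1) j)
     = (\<lambda>j. \<Sum>l\<in>{1..n}. cvec C d i l * simple_root C d n l j)"
  proof
    fix j
    show "smult_w (- Delta C d) (fund_weight n i) j - smult_w (aseq C d i) (fund_weight_bar n 1) j
       = (\<Sum>l\<in>{1..n}. cvec C d i l * simple_root C d n l j)"
    proof (cases "j \<in> {1..n}")
      case True
      have "(\<Sum>l\<in>{1..n}. cvec C d i l * simple_root C d n l j) = (\<Sum>l\<in>{1..n}. cvec C d i l * ext_cartan C d n j l)"
        using True by (simp add: simple_root_def)
      also have "\<dots> = Lop C d (cvec C d i) j + (if j = n then cvec C d i (Suc n) else 0)"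
        by (rule row_lemma) (use True n d in auto)
      also have "\<dots> = - Delta C d * (if j = i then 1 else 0) - (if j = n then aseq C d i else 0)"
        using Lop_c[OF d, of i j C] True i cn by simp
      finally show ?thesis using True n d by (simp add: fund_weight_bar_def smult_w_def fund_weight_def)
    next
      case False
      have z: "\<And>l. simple_root C d n l j = 0" "fund_weight n i j = 0" "fund_weight_bar n 1 j = 0"
        using False by (auto simp: simple_root_def fund_weight_def fund_weight_bar_def)
      show ?thesis using z by (simp add: smult_w_def)
    qed
  qed
  then show ?thesis unfolding congr_Q_def root_lattice_def by blast
qed

lemma tail_rel:
  assumes d: "1 \<le> d" and dn: "d < n"
    and hc: "\<And>k. k \<in> {1..n} \<Longrightarrow> (\<Sum>l\<in>{1..n}. c l * ext_cartan C d n k l) = \<kappa> * (if k = n then 1 else 0)"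
  shows "Delta C d * \<kappa> = (c (Suc d) - c d) * (Kd C d $$ (d - 1, d - 1) + Delta C d * (int n + 1 - int d))"
proof -
  define s where "s = c (Suc d) - c d"
  have hL: "Lop C d c k + (if k = n then c (Suc n) else 0) = \<kappa> * (if k = n then 1 else 0)"
    if "k \<in> {1..n}" for k
    using hc[OF that] row_lemma[of d n k c C] that dn d by simp
  have mid: "- c (k - 1) + 2 * c k - c (Suc k) = 0" if "d < k" "k < n" for k
    using hL[of k] that by (simp add: Lop_def)
  have lin2: "(d + t \<le> n \<longrightarrow> c (d + t) = c d + s * int t) \<and>
              (d + Suc t \<le> n \<longrightarrow> c (d + Suc t) = c d + s * int (Suc t))" for t
  proof (induction t)
    case 0 then show ?case by (simp add: s_def)
  next
    case (Suc t)
    have "d + Suc (Suc t) \<le> n \<longrightarrow> c (d + Suc (Suc t)) = c d + s * int (Suc (Suc t))"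
    proof
      assume a: "d + Suc (Suc t) \<le> n"
      have "- c (d + Suc t - 1) + 2 * c (d + Suc t) - c (Suc (d + Suc t)) = 0"
        by (rule mid) (use a in auto)
      then show "c (d + Suc (Suc t)) = c d + s * int (Suc (Suc t))"
        using Suc a by (simp add: algebra_simps)
    qed
    then show ?case using Suc by simp
  qed
  have lin: "c j = c d + s * (int j - int d)" if "d \<le> j" "j \<le> n" for j
    using lin2[of "j - d"] that by simp
  have "Lop C d c n + c (Suc n) = \<kappa>" using hL[of n] dn d by simp
  then have kap: "\<kappa> = 2 * c n - c (n - 1)" using dn by (simp add: Lop_def)
  have kap2: "\<kappa> = c d + s * (int n + 1 - int d)"
  proof -
    have l1: "c (n - 1) = c d + s * (int (n - 1) - int d)" by (rule lin) (use dn in auto)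
    have l2: "c n = c d + s * (int n - int d)" by (rule lin) (use dn in auto)
    have "int (n - 1) = int n - 1" using dn by simp
    then show ?thesis using kap l1 l2 by (simp add: algebra_simps)
  qed
  have hy: "(\<Sum>j\<in>{1..d}. c j * C k j) - (if k = d then c d else 0) = s * (if k = d then 1 else 0)"
    if "k \<in> {1..d}" for k
  proof -
    have "Lop C d c k = 0" using hL[of k] that dn by auto
    then show ?thesis using that by (auto simp: Lop_def s_def split: if_splits)
  qed
  have "Delta C d * c d = s * Kd C d $$ (d - 1, d - 1)"
    by (rule y_unique[OF d]) (use hy in auto)
  moreover from kap2 have "Delta C d * \<kappa> = Delta C d * (c d + s * (int n + 1 - int d))" by simp
  ultimately show ?thesis unfolding s_def[symmetric] by (simp add: algebra_simps)
qed

lemma abs_mult_ge: "(x::int) \<noteq> 0 \<Longrightarrow> \<bar>y\<bar> \<le> \<bar>x * y\<bar>"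
proof -
  assume "x \<noteq> 0"
  then have "1 \<le> \<bar>x\<bar>" by simp
  then have "1 * \<bar>y\<bar> \<le> \<bar>x\<bar> * \<bar>y\<bar>" by (intro mult_right_mono) auto
  then show ?thesis by (simp add: abs_mult)
qed

lemma lattice_rows:
  assumes "congr_Q C d n lam mu" "d \<le> n" "1 \<le> d"
  obtains c where "\<And>k. k \<in> {1..n} \<Longrightarrow> lam k - mu k = (\<Sum>l\<in>{1..n}. c l * ext_cartan C d n k l)"
proof -
  from assms(1) obtain c where hc: "(\<lambda>j. lam j - mu j) = (\<lambda>i. \<Sum>j\<in>{1..n}. c j * simple_root C d n j i)"
    unfolding congr_Q_def root_lattice_def by blast
  show ?thesis
  proof (rule that)
    fix k assume k: "k \<in> {1..n}"
    have "lam k - mu k = (\<Sum>j\<in>{1..n}. c j * simple_root C d n j k)" using fun_cong[OF hc, of k] by simp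
    also have "\<dots> = (\<Sum>l\<in>{1..n}. c l * ext_cartan C d n k l)" using k by (simp add: simple_root_def)
    finally show "lam k - mu k = (\<Sum>l\<in>{1..n}. c l * ext_cartan C d n k l)" .
  qed
qed

theorem proposition3p3:
  fixes C :: "nat \<Rightarrow> nat \<Rightarrow> int" and d :: nat
  assumes "d \<ge> 1"
    and "is_gcm d C"
    and "symmetrizable d C"
    and "extensible C d"
  shows "\<exists>a :: nat \<Rightarrow> int. weight_seq_prop C d a \<and>
           (\<forall>b :: nat \<Rightarrow> int. weight_seq_prop C d b \<longrightarrow> (\<forall>i\<ge>1. b i = a i))"
proof -
  have d: "1 \<le> d" using assms(1) by simp
  have Dnz: "Delta C d \<noteq> 0" using assms(4) by (simp add: extensible_def)
  have A: "weight_seq_prop C d (aseq C d)"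
    unfolding weight_seq_prop_def using exist_n[OF d] by blast
  have U: "b i = aseq C d i" if hb: "weight_seq_prop C d b" and i: "1 \<le> i" for b i
  proof -
    define K0 where "K0 = Kd C d $$ (d - 1, d - 1)"
    define D0 where "D0 = det_ext C d d"
    define \<kappa> where "\<kappa> = b i - aseq C d i"
    define T where "T = nat (\<bar>D0\<bar> + \<bar>K0\<bar> + \<bar>Delta C d * \<kappa>\<bar>) + i + 1"
    define n where "n = d + T"
    have dn: "d < n" "d \<le> n" and iT: "i \<le> n" unfolding n_def T_def by auto
    have Tge: "int T \<ge> \<bar>D0\<bar> + \<bar>K0\<bar> + \<bar>Delta C d * \<kappa>\<bar> + 1" unfolding T_def by simp
    have detn: "det_ext C d n = D0 + int T * Delta C d"
      using D_lin[OF d dn(2), of C] unfolding D0_def n_def by simp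
    have "\<bar>int T\<bar> \<le> \<bar>Delta C d * int T\<bar>" by (rule abs_mult_ge[OF Dnz])
    then have "det_ext C d n \<noteq> 0" using Tge detn by (auto simp: algebra_simps)
    then have ca: "congr_Q C d n (smult_w (- Delta C d) (fund_weight n i)) (smult_w (aseq C d i) (fund_weight_bar n 1))"
      and cb: "congr_Q C d n (smult_w (- Delta C d) (fund_weight n i)) (smult_w (b i) (fund_weight_bar n 1))"
      using exist_n[OF d dn(2), of i C] hb iT i dn unfolding weight_seq_prop_def by auto
    obtain c1 where c1: "\<And>k. k \<in> {1..n} \<Longrightarrow> smult_w (- Delta C d) (fund_weight n i) k - smult_w (aseq C d i) (fund_weight_bar n 1) k
        = (\<Sum>l\<in>{1..n}. c1 l * ext_cartan C d n k l)"
      using lattice_rows[OF ca dn(2) d] by blast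
    obtain c2 where c2: "\<And>k. k \<in> {1..n} \<Longrightarrow> smult_w (- Delta C d) (fund_weight n i) k - smult_w (b i) (fund_weight_bar n 1) k
        = (\<Sum>l\<in>{1..n}. c2 l * ext_cartan C d n k l)"
      using lattice_rows[OF cb dn(2) d] by blast
    define c where "c = (\<lambda>l. c1 l - c2 l)"
    have hc: "(\<Sum>l\<in>{1..n}. c l * ext_cartan C d n k l) = \<kappa> * (if k = n then 1 else 0)"
      if k: "k \<in> {1..n}" for k
    proof -
      have "(\<Sum>l\<in>{1..n}. c l * ext_cartan C d n k l) = (\<Sum>l\<in>{1..n}. c1 l * ext_cartan C d n k l) - (\<Sum>l\<in>{1..n}. c2 l * ext_cartan C d n k l)"
        unfolding c_def by (simp add: algebra_simps sum_subtractf)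
      also have "\<dots> = smult_w (b i) (fund_weight_bar n 1) k - smult_w (aseq C d i) (fund_weight_bar n 1) k"
        using c1[OF k] c2[OF k] by simp
      also have "\<dots> = \<kappa> * (if k = n then 1 else 0)"
        using k dn by (simp add: smult_w_def fund_weight_bar_def fund_weight_def \<kappa>_def algebra_simps)
      finally show ?thesis .
    qed
    define s where "s = c (Suc d) - c d"
    define M where "M = K0 + Delta C d * (int n + 1 - int d)"
    have rel: "Delta C d * \<kappa> = s * M"
      unfolding s_def M_def K0_def by (rule tail_rel[OF d dn(1)]) (use hc in auto)
    have "int n + 1 - int d = int T + 1" unfolding n_def by simp
    then have "\<bar>int T + 1\<bar> \<le> \<bar>Delta C d * (int n + 1 - int d)\<bar>" using abs_mult_ge[OF Dnz] by metis
    then have Mbig: "\<bar>M\<bar> > \<bar>Delta C d * \<kappa>\<bar>" unfolding M_def using Tge by linarith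
    have "s = 0"
    proof (rule ccontr)
      assume "s \<noteq> 0"
      then have "\<bar>M\<bar> \<le> \<bar>s * M\<bar>" by (rule abs_mult_ge)
      then show False using rel Mbig by simp
    qed
    then have "Delta C d * \<kappa> = 0" using rel by simp
    then have "\<kappa> = 0" using Dnz by simp
    then show ?thesis unfolding \<kappa>_def by simp
  qed
  show ?thesis using A U by blast
qed

end
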